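(* If $X$ is a cohesive almost zero-dimensional space and $K\subset X$ is $\sigma$-compact, then $X\setminus K$ is cohesive.
   Context: All spaces are separable and metrizable. A subset $A$ of $X$ is a C-set in $X$ if it is an intersection of clopen subsets of $X$. $X$ is almost zero-dimensional if every point has a neighborhood basis consisting of C-sets in $X$. $X$ is cohesive if every point $x\in X$ has a neighborhood which contains no non-empty clopen subset of $X$. *)

theory Defs
  imports "HOL-Analysis.Analysis"
begin

text \<open>A C-set in X: an intersection of clopen subsets of X (the empty intersection
  being the whole space topspace X).\<close>
definition C_set :: "'a topology \<Rightarrow> 'a set \<Rightarrow> bool" where
  "C_set X A \<longleftrightarrow>
     (\<exists>\<U>. (\<forall>U\<in>\<U>. closedin X U \<and> openin X U) \<and> A = topspace X \<inter> \<Inter>\<U>)"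

definition almost_zero_dimensional :: "'a topology \<Rightarrow> bool" where
  "almost_zero_dimensional X \<longleftrightarrow> neighbourhood_base_of (C_set X) X"

definition cohesive :: "'a topology \<Rightarrow> bool" where
  "cohesive X \<longleftrightarrow>
     (\<forall>x\<in>topspace X. \<exists>N. (\<exists>V. openin X V \<and> x \<in> V \<and> V \<subseteq> N) \<and> N \<subseteq> topspace X \<and>
        \<not> (\<exists>C. C \<noteq> {} \<and> closedin X C \<and> openin X C \<and> C \<subseteq> N))"

definition sigma_compactin :: "'a topology \<Rightarrow> 'a set \<Rightarrow> bool" where
  "sigma_compactin X K \<longleftrightarrow>
     (\<exists>\<F>. countable \<F> \<and> (\<forall>C\<in>\<F>. compactin X C) \<and> K = \<Union>\<F>)"

end

theory Submission
  imports Defs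
begin

lemma sep_metr_second_countable:
  assumes "metrizable_space X" "separable_space X"
  shows "second_countable X"
proof -
  obtain M d where md: "Metric_space M d" and X: "X = Metric_space.mtopology M d"
    using assms(1) metrizable_space_def by blast
  interpret Metric_space M d by (rule md)
  obtain C where C: "countable C" "C \<subseteq> M" "mtopology closure_of C = M"
    using assms(2) unfolding separable_space_def X by auto
  define B where "B = (\<lambda>(c,n). mball c (1/Suc n)) ` (C \<times> (UNIV::nat set))"
  have "countable B" unfolding B_def using C(1) by simp
  moreover have "\<forall>V\<in>B. openin mtopology V" unfolding B_def by auto
  moreover have "\<exists>V\<in>B. x \<in> V \<and> V \<subseteq> U" if Uop: "openin mtopology U" and xU: "x \<in> U" for U x
  proof -
    have Uo: "U \<subseteq> M \<and> (\<forall>x. x \<in> U \<longrightarrow> (\<exists>r>0. mball x r \<subseteq> U))"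
      using Uop openin_mtopology by simp
    obtain r where r: "r > 0" "mball x r \<subseteq> U" using Uo xU by blast
    have xM: "x \<in> M" using Uo xU by blast
    obtain n :: nat where n: "inverse (real (Suc n)) < r/2"
      using reals_Archimedean \<open>r>0\<close> by (metis half_gt_zero)
    have "x \<in> mtopology closure_of C" using C xM by simp
    then obtain c where c: "c \<in> C" "c \<in> mball x (1/Suc n)"
      unfolding in_closure_of by (meson centre_in_mball_iff of_nat_0_less_iff openin_mball xM zero_less_Suc zero_less_divide_1_iff)
    have "mball c (1/Suc n) \<subseteq> mball x r"
    proof
      fix y assume y: "y \<in> mball c (1/Suc n)"
      have "d x y \<le> d x c + d c y" using y c triangle by auto
      also have "\<dots> < r" using y c n by (simp add: inverse_eq_divide)
      finally show "y \<in> mball x r" using y xM by auto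
    qed
    moreover have "x \<in> mball c (1/Suc n)" using c commute by auto
    ultimately show ?thesis unfolding B_def using c r by blast
  qed
  ultimately show ?thesis unfolding second_countable_def X by blast
qed

lemma C_set_closed: "C_set X A \<Longrightarrow> closedin X A"
proof -
  assume "C_set X A"
  then obtain \<U> where U: "\<forall>U\<in>\<U>. closedin X U \<and> openin X U" "A = topspace X \<inter> \<Inter>\<U>"
    unfolding C_set_def by blast
  show ?thesis
  proof (cases "\<U> = {}")
    case True then show ?thesis using U by simp
  next
    case False then show ?thesis using U by (simp add: closedin_Inter closedin_Int)
  qed
qed

lemma C_set_empty: "C_set X {}"
  unfolding C_set_def by (rule exI[of _ "{{}}"]) auto

lemma C_set_Un:
  assumes "C_set X A" "C_set X B" shows "C_set X (A \<union> B)"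
proof -
  obtain \<U> where U: "\<forall>U\<in>\<U>. closedin X U \<and> openin X U" "A = topspace X \<inter> \<Inter>\<U>"
    using assms(1) unfolding C_set_def by blast
  obtain \<V> where V: "\<forall>U\<in>\<V>. closedin X U \<and> openin X U" "B = topspace X \<inter> \<Inter>\<V>"
    using assms(2) unfolding C_set_def by blast
  define \<W> where "\<W> = {U \<union> V |U V. U \<in> \<U> \<and> V \<in> \<V>}"
  have "\<forall>W\<in>\<W>. closedin X W \<and> openin X W" unfolding \<W>_def using U V by auto
  moreover have "A \<union> B = topspace X \<inter> \<Inter>\<W>"
    unfolding \<W>_def U V by blast
  ultimately show ?thesis unfolding C_set_def by blast
qed

lemma C_set_UN_atMost:
  fixes n :: nat
  assumes "\<And>k. C_set X (N k)" shows "C_set X (\<Union>k\<le>n. N k)"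
proof (induction n)
  case 0 then show ?case using assms by simp
next
  case (Suc n)
  have "C_set X (N (Suc n) \<union> (\<Union>k\<le>n. N k))" using C_set_Un Suc.IH assms by blast
  then show ?case by (simp add: atMost_Suc)
qed

lemma clopen_sep:
  assumes "compactin X B" "C_set X M" "B \<inter> M = {}"
  shows "\<exists>L. closedin X L \<and> openin X L \<and> B \<subseteq> L \<and> L \<inter> M = {}"
proof -
  obtain \<U> where U: "\<forall>U\<in>\<U>. closedin X U \<and> openin X U" "M = topspace X \<inter> \<Inter>\<U>"
    using assms(2) unfolding C_set_def by blast
  define Opn where "Opn = (\<lambda>U. topspace X - U) ` \<U>"
  have "\<forall>Q1\<in>Opn. openin X Q1" unfolding Opn_def using U by auto
  moreover have "B \<subseteq> \<Union>Opn"
  proof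
    fix b assume b: "b \<in> B"
    then have "b \<in> topspace X" using assms(1) compactin_subset_topspace by blast
    moreover have "b \<notin> M" using b assms(3) by blast
    ultimately obtain U where "U \<in> \<U>" "b \<notin> U" using U by blast
    then show "b \<in> \<Union>Opn" unfolding Opn_def using \<open>b \<in> topspace X\<close> by blast
  qed
  ultimately obtain \<F> where F: "finite \<F>" "\<F> \<subseteq> Opn" "B \<subseteq> \<Union>\<F>"
    using assms(1) unfolding compactin_def by meson
  have "closedin X (\<Union>\<F>)"
    using F U by (intro closedin_Union) (auto simp: Opn_def)
  moreover have "openin X (\<Union>\<F>)"
    using F U by (intro openin_Union) (auto simp: Opn_def)
  moreover have "\<Union>\<F> \<inter> M = {}" using F U unfolding Opn_def by blast
  ultimately show ?thesis using F by blast
qed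

lemma C_cover:
  assumes "almost_zero_dimensional X" "second_countable X" "openin X U"
  shows "\<exists>Nf::nat \<Rightarrow> 'a set. (\<forall>k. C_set X (Nf k) \<and> Nf k \<subseteq> U) \<and>
           (\<forall>p\<in>U. \<exists>k W. openin X W \<and> p \<in> W \<and> W \<subseteq> Nf k)"
proof -
  obtain \<B> where B: "countable \<B>" "\<forall>V\<in>\<B>. openin X V"
    "\<And>U x. openin X U \<Longrightarrow> x \<in> U \<Longrightarrow> \<exists>V\<in>\<B>. x \<in> V \<and> V \<subseteq> U"
    using assms(2) unfolding second_countable_def by meson
  define \<B>' where "\<B>' = {V\<in>\<B>. \<exists>N. C_set X N \<and> V \<subseteq> N \<and> N \<subseteq> U}"
  have "\<forall>V\<in>\<B>'. \<exists>N. C_set X N \<and> V \<subseteq> N \<and> N \<subseteq> U" unfolding \<B>'_def by blast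
  then obtain g where g: "\<And>V. V \<in> \<B>' \<Longrightarrow> C_set X (g V) \<and> V \<subseteq> g V \<and> g V \<subseteq> U"
    by metis
  have cB': "countable \<B>'" unfolding \<B>'_def using B(1) by simp
  define Nf where "Nf k = (if \<B>' = {} then {} else g (from_nat_into \<B>' k))" for k
  have "C_set X (Nf k) \<and> Nf k \<subseteq> U" for k
    unfolding Nf_def using g C_set_empty[of X] by (auto simp: from_nat_into)
  moreover have "\<exists>k W. openin X W \<and> p \<in> W \<and> W \<subseteq> Nf k" if p: "p \<in> U" for p
  proof -
    have nb: "\<forall>W x. openin X W \<and> x \<in> W \<longrightarrow> (\<exists>U V. openin X U \<and> C_set X V \<and> x \<in> U \<and> U \<subseteq> V \<and> V \<subseteq> W)"
      using assms(1) unfolding almost_zero_dimensional_def neighbourhood_base_of by simp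
    obtain W N where WN: "openin X W" "C_set X N" "p \<in> W" "W \<subseteq> N" "N \<subseteq> U"
      using nb assms(3) p by meson
    obtain V where V: "V \<in> \<B>" "p \<in> V" "V \<subseteq> W" using B(3) WN by blast
    then have VB': "V \<in> \<B>'" unfolding \<B>'_def using WN by blast
    then have "Nf (to_nat_on \<B>' V) = g V" unfolding Nf_def using cB' by auto
    then show ?thesis using g[OF VB'] V B(2) by metis
  qed
  ultimately show ?thesis by blast
qed


lemma key:
  assumes metr: "metrizable_space X" and sep: "separable_space X"
    and azd: "almost_zero_dimensional X"
    and Ksub: "K \<subseteq> topspace X" and sck: "sigma_compactin X K"
    and Vo: "openin X V"
    and nocl: "\<not> (\<exists>G. G \<noteq> {} \<and> closedin X G \<and> openin X G \<and> G \<subseteq> V)"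
    and Dc: "closedin X D" and DV: "D \<subseteq> V"
    and Cne: "C \<noteq> {}" and Ccl: "closedin (subtopology X (topspace X - K)) C"
    and Cop: "openin (subtopology X (topspace X - K)) C" and CD: "C \<subseteq> D"
  shows False
proof -
  define Y where "Y = topspace X - K"
  define S where "S = subtopology X Y"
  have tS: "topspace S = Y" unfolding S_def Y_def by auto
  have CY: "C \<subseteq> Y" using Ccl closedin_subset tS unfolding S_def Y_def by blast
  define P where "P = X closure_of C"
  define Q where "Q = X closure_of (Y - C) \<union> (topspace X - V)"
  have Pc: "closedin X P" unfolding P_def by simp
  have Qc: "closedin X Q" unfolding Q_def using Vo by (intro closedin_Un) auto
  have PD: "P \<subseteq> D" unfolding P_def using CD Dc by (rule closure_of_minimal)
  have clC: "S closure_of C = C" using Ccl unfolding S_def Y_def closure_of_eq by simp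
  have "closedin S (topspace S - C)"
    using Cop unfolding S_def Y_def by (intro closedin_diff closedin_topspace)
  then have clYC0: "closedin S (Y - C)" using tS by simp
  then have clYC: "S closure_of (Y - C) = Y - C" by (simp add: closure_of_eq)
  have CP: "C \<subseteq> P" unfolding P_def using CY unfolding Y_def by (intro closure_of_subset) blast
  have PQK: "P \<inter> Q \<subseteq> K"
  proof
    fix z assume z: "z \<in> P \<inter> Q"
    have zt: "z \<in> topspace X" using z closure_of_subset_topspace[of X C] unfolding P_def by blast
    show "z \<in> K"
    proof (rule ccontr)
      assume "z \<notin> K"
      then have zY: "z \<in> Y" using zt Y_def by blast
      have "z \<in> C" using clC zY z unfolding P_def S_def closure_of_subtopology
        by (metis CY IntI inf.absorb2 IntD1)
      moreover have "z \<notin> X closure_of (Y - C)"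
      proof
        assume "z \<in> X closure_of (Y - C)"
        then have "z \<in> S closure_of (Y - C)" unfolding S_def closure_of_subtopology
          using zY by (simp add: Int_absorb1 Diff_subset)
        then show False using clYC \<open>z \<in> C\<close> by blast
      qed
      moreover have "z \<in> V" using z PD DV by blast
      ultimately show False using z unfolding Q_def by blast
    qed
  qed
  have YPQ: "Y \<subseteq> P \<union> Q"
  proof
    fix y assume y: "y \<in> Y"
    show "y \<in> P \<union> Q"
    proof (cases "y \<in> C")
      case True then show ?thesis using CP by blast
    next
      case False
      have "Y - C \<subseteq> X closure_of (Y - C)" by (rule closure_of_subset) (auto simp: Y_def)
      then show ?thesis using y False unfolding Q_def by blast
    qed
  qed
  define W where "W = topspace X - (P \<inter> Q)"
  have Wo: "openin X W" unfolding W_def using Pc Qc by (intro openin_diff) auto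
  have "normal_space (subtopology X W)"
    by (intro metrizable_imp_normal_space metrizable_space_subtopology metr)
  moreover have "closedin (subtopology X W) (W \<inter> P)" using Pc closedin_subtopology_Int_closed by blast
  moreover have "closedin (subtopology X W) (W \<inter> Q)" using Qc closedin_subtopology_Int_closed by blast
  moreover have "disjnt (W \<inter> P) (W \<inter> Q)" unfolding W_def disjnt_def by blast
  ultimately obtain O1 O2 where O: "openin (subtopology X W) O1" "openin (subtopology X W) O2"
     "W \<inter> P \<subseteq> O1" "W \<inter> Q \<subseteq> O2" "disjnt O1 O2"
    unfolding normal_space_def by meson
  have O1o: "openin X O1" using O(1) Wo openin_trans_full by blast
  have O2o: "openin X O2" using O(2) Wo openin_trans_full by blast
  have O1W: "O1 \<subseteq> W" using O(1) openin_subset by fastforce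
  have O2W: "O2 \<subseteq> W" using O(2) openin_subset by fastforce
  define B where "B = topspace X - (O1 \<union> O2)"
  have Bc: "closedin X B" unfolding B_def using O1o O2o by (intro closedin_diff) auto
  have BK: "B \<subseteq> K"
  proof
    fix z assume z: "z \<in> B"
    show "z \<in> K"
    proof (cases "z \<in> W")
      case True
      then have "z \<notin> P" "z \<notin> Q" using z O(3,4) unfolding B_def by blast+
      then show ?thesis using YPQ z unfolding B_def Y_def by blast
    next
      case False then show ?thesis using z PQK unfolding B_def W_def by blast
    qed
  qed
  define Z where "Z = topspace X - O2"
  have ZV: "Z \<subseteq> V"
  proof
    fix z assume z: "z \<in> Z"
    show "z \<in> V"
    proof (rule ccontr)
      assume "z \<notin> V"
      then have zQ: "z \<in> Q" using z unfolding Z_def Q_def by blast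
      show False
      proof (cases "z \<in> W")
        case True then show False using zQ z O(4) unfolding Z_def by blast
      next
        case False then have "z \<in> P" using z unfolding Z_def W_def by blast
        then show False using PD DV \<open>z \<notin> V\<close> by blast
      qed
    qed
  qed
  obtain a where aC: "a \<in> C" using Cne by blast
  have aY: "a \<in> Y" using aC CY by blast
  have aW: "a \<in> W" using aY PQK unfolding W_def Y_def by blast
  have aP: "a \<in> P" using aC CP by blast
  have aO1: "a \<in> O1" using aW aP O(3) by blast
  obtain \<F> where F: "countable \<F>" "\<forall>C\<in>\<F>. compactin X C" "K = \<Union>\<F>"
    using sck unfolding sigma_compactin_def by blast
  define Fs where "Fs n = (if \<F> = {} then {} else from_nat_into \<F> n)" for n
  have Fsc: "compactin X (Fs n)" for n
    unfolding Fs_def using F(2) by (auto simp: from_nat_into)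
  have KF: "K \<subseteq> (\<Union>n. Fs n)"
  proof
    fix z assume "z \<in> K"
    then obtain F0 where "F0 \<in> \<F>" "z \<in> F0" using F(3) by blast
    then have "Fs (to_nat_on \<F> F0) = F0" unfolding Fs_def using F(1) by auto
    then show "z \<in> (\<Union>n. Fs n)" using \<open>z \<in> F0\<close> by blast
  qed
  have sc: "second_countable X" using metr sep by (rule sep_metr_second_countable)
  from C_cover[OF azd sc O1o] obtain Nf :: "nat \<Rightarrow> 'a set" where Nf0: "(\<forall>k. C_set X (Nf k) \<and> Nf k \<subseteq> O1) \<and>
           (\<forall>p\<in>O1. \<exists>k W. openin X W \<and> p \<in> W \<and> W \<subseteq> Nf k)"
    ..
  have Nf: "\<And>k. C_set X (Nf k) \<and> Nf k \<subseteq> O1"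
    "\<And>p. p \<in> O1 \<Longrightarrow> \<exists>k W. openin X W \<and> p \<in> W \<and> W \<subseteq> Nf k"
    using Nf0 by simp_all
  obtain ka Wa where Wa: "openin X Wa" "a \<in> Wa" "Wa \<subseteq> Nf ka" using Nf(2) aO1 by blast
  define Mn where "Mn n = (\<Union>k\<le>n+ka. Nf k)" for n
  have MC: "C_set X (Mn n)" for n unfolding Mn_def using Nf(1) by (intro C_set_UN_atMost) blast
  have MO1: "Mn n \<subseteq> O1" for n unfolding Mn_def using Nf(1) by blast
  have "\<exists>L. closedin X L \<and> openin X L \<and> B \<inter> Fs n \<subseteq> L \<and> L \<inter> Mn n = {}" for n
  proof (rule clopen_sep)
    show "compactin X (B \<inter> Fs n)" using Bc Fsc by (rule closed_Int_compactin)
    show "C_set X (Mn n)" by (rule MC)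
    show "B \<inter> Fs n \<inter> Mn n = {}" using MO1[of n] unfolding B_def by blast
  qed
  then obtain L where L: "\<And>n. closedin X (L n) \<and> openin X (L n) \<and> B \<inter> Fs n \<subseteq> L n \<and> L n \<inter> Mn n = {}"
    by metis
  have BL: "B \<subseteq> (\<Union>n. L n)"
  proof
    fix z assume zB: "z \<in> B"
    then have "z \<in> K" using BK by blast
    then obtain n where "z \<in> Fs n" using KF by blast
    then have "z \<in> L n" using zB L[of n] by blast
    then show "z \<in> (\<Union>n. L n)" by blast
  qed
  define G where "G = Z - (\<Union>n. L n)"
  have Gc: "closedin X G" unfolding G_def Z_def
    using O2o L by (intro closedin_diff closedin_diff[OF closedin_topspace] openin_Union) auto
  have Go: "openin X G"
    unfolding openin_subopen[of X G]
  proof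
    fix p assume p: "p \<in> G"
    then have pt: "p \<in> topspace X" "p \<notin> O2" "\<And>n. p \<notin> L n" unfolding G_def Z_def by auto
    then have "p \<notin> B" using BL by blast
    then have pO1: "p \<in> O1" using pt unfolding B_def by blast
    obtain k Wp where Wp: "openin X Wp" "p \<in> Wp" "Wp \<subseteq> Nf k" using Nf(2) pO1 by blast
    define T where "T = (O1 \<inter> Wp) - (\<Union>n\<in>{..<k}. L n)"
    have "openin X T" unfolding T_def using O1o Wp(1) L
      by (intro openin_diff openin_Int closedin_Union) auto
    moreover have "p \<in> T" unfolding T_def using pO1 Wp pt by blast
    moreover have "T \<subseteq> G"
    proof
      fix t assume t: "t \<in> T"
      have tt: "t \<in> topspace X" using t O1o openin_subset unfolding T_def by blast
      have "t \<notin> O2" using t O(5) unfolding T_def disjnt_def by blast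
      moreover have "t \<notin> L n" for n
      proof (cases "n < k")
        case True then show ?thesis using t unfolding T_def by blast
      next
        case False
        then have "k \<in> {..n+ka}" by simp
        then have "Nf k \<subseteq> Mn n" unfolding Mn_def by blast
        then show ?thesis using t Wp L[of n] unfolding T_def by blast
      qed
      ultimately show "t \<in> G" using tt unfolding G_def Z_def by blast
    qed
    ultimately show "\<exists>T. openin X T \<and> p \<in> T \<and> T \<subseteq> G" by blast
  qed
  have "a \<in> G"
  proof -
    have "a \<in> topspace X" using aY unfolding Y_def by blast
    moreover have "a \<notin> O2" using aO1 O(5) unfolding disjnt_def by blast
    moreover have "a \<notin> L n" for n
    proof -
      have "ka \<in> {..n+ka}" by simp
      then have "Nf ka \<subseteq> Mn n" unfolding Mn_def by blast
      then show ?thesis using Wa L[of n] by blast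
    qed
    ultimately show ?thesis unfolding G_def Z_def by blast
  qed
  moreover have "G \<subseteq> V" using ZV unfolding G_def by blast
  ultimately show False using nocl Gc Go by blast
qed

theorem theorem4p10:
  fixes X :: "'a topology" and K :: "'a set"
  assumes "metrizable_space X" and "separable_space X"
    and "cohesive X" and "almost_zero_dimensional X"
    and "K \<subseteq> topspace X" and "sigma_compactin X K"
  shows "cohesive (subtopology X (topspace X - K))"
  unfolding cohesive_def
proof
  fix x assume "x \<in> topspace (subtopology X (topspace X - K))"
  then have x: "x \<in> topspace X" "x \<notin> K" by auto
  have "\<exists>N. (\<exists>V. openin X V \<and> x \<in> V \<and> V \<subseteq> N) \<and> N \<subseteq> topspace X \<and>
        \<not> (\<exists>C. C \<noteq> {} \<and> closedin X C \<and> openin X C \<and> C \<subseteq> N)"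
    using assms(3) x(1) unfolding cohesive_def by (rule bspec)
  then obtain N V where NV: "openin X V" "x \<in> V" "V \<subseteq> N" "N \<subseteq> topspace X"
     "\<not> (\<exists>C. C \<noteq> {} \<and> closedin X C \<and> openin X C \<and> C \<subseteq> N)"
    by (elim exE conjE) simp
  have nb: "\<forall>W x. openin X W \<and> x \<in> W \<longrightarrow> (\<exists>U V. openin X U \<and> C_set X V \<and> x \<in> U \<and> U \<subseteq> V \<and> V \<subseteq> W)"
    using assms(4) unfolding almost_zero_dimensional_def neighbourhood_base_of by simp
  obtain W0 D where WD: "openin X W0" "C_set X D" "x \<in> W0" "W0 \<subseteq> D" "D \<subseteq> V"
    using nb NV(1,2) by meson
  have nocl: "\<not> (\<exists>G. G \<noteq> {} \<and> closedin X G \<and> openin X G \<and> G \<subseteq> V)" using NV by blast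
  let ?S = "subtopology X (topspace X - K)"
  have "openin ?S (W0 \<inter> (topspace X - K))" using WD(1) by (rule openin_subtopology_Int)
  moreover have "x \<in> W0 \<inter> (topspace X - K)" using x WD by blast
  moreover have "W0 \<inter> (topspace X - K) \<subseteq> topspace ?S" by auto
  moreover have "\<not> (\<exists>C. C \<noteq> {} \<and> closedin ?S C \<and> openin ?S C \<and> C \<subseteq> W0 \<inter> (topspace X - K))"
  proof
    assume "\<exists>C. C \<noteq> {} \<and> closedin ?S C \<and> openin ?S C \<and> C \<subseteq> W0 \<inter> (topspace X - K)"
    then obtain C where C: "C \<noteq> {}" "closedin ?S C" "openin ?S C" "C \<subseteq> W0 \<inter> (topspace X - K)" by blast
    show False
      by (rule key[OF assms(1,2,4,5,6) NV(1) nocl C_set_closed[OF WD(2)] WD(5) C(1,2,3)])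
         (use C(4) WD(4) in blast)
  qed
  ultimately show "\<exists>N. (\<exists>V. openin ?S V \<and> x \<in> V \<and> V \<subseteq> N) \<and> N \<subseteq> topspace ?S \<and>
        \<not> (\<exists>C. C \<noteq> {} \<and> closedin ?S C \<and> openin ?S C \<and> C \<subseteq> N)" by blast
qed

end
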